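(* Consider the system and safe set $\mathcal{C}=\{x: h(x)\ge 0\}$ described in the context. Suppose that: (i) Assumptions A, B$'$ and C$'$ (see context) hold; (ii) there exist positive constants $\gamma,\epsilon_1,\epsilon_2,\gamma_\theta,\gamma_\lambda>0$ such that for every $x\in\mathcal{C}$ the set $$K_{BF}^g(x)=\{\mathfrak{u}\in\mathbb{R}:\Psi_0(x)+\Psi_1(x)\mathfrak{u}\geq0\}$$ is non-empty, where $\Psi_0=\mathcal{M}+h_{x_2}f_\theta^0-(\epsilon_1+\epsilon_2)+\gamma\big(h-\frac{\bar\mu^2}{2\gamma_\theta}-\frac{\bar\nu^2}{2\gamma_\lambda}\big)$ and $\Psi_1=h_{x_2}(g+g_\lambda^0)h_{x_2}^\top$; (iii) the scalar estimates $\hat\mu,\hat\nu$ evolve according to $$\dot{\hat\mu}=-\gamma\hat\mu+\gamma_\theta\|h_{x_2}\|\|\Omega_\varphi\|,\qquad \dot{\hat\nu}=-\gamma\hat\nu+\gamma_\lambda\|h_{x_2}\|^2|u_0|\|\Omega_\psi\|,$$ with $\hat\mu(0)>0$, $\hat\nu(0)>0$, where $u_0\in\mathbb{R}$ is a Lipschitz function satisfying $u_0\in K_{BF}^g(x)$; (iv) $h(x(0))\geq\frac{\hat\mu(0)^2+\bar\mu^2}{2\gamma_\theta}+\frac{\hat\nu(0)^2+\bar\nu^2}{2\gamma_\lambda}$. Then the control input $u=s_g(u_0)h_{x_2}^\top\in\mathbb{R}^n$, where $$s_g(u_0)=u_0+\frac{\kappa_{1,g}}{b^*}+\frac{\kappa_{2,g}^2u_0^2}{b^*(\kappa_{2,g}\|h_{x_2}\||u_0|+\epsilon_2)},\quad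 \kappa_{1,g}=\frac{\hat\mu^2\|\Omega_\varphi\|^2}{\hat\mu\|\Omega_\varphi\|\|h_{x_2}\|+\epsilon_1},\quad\kappa_{2,g}=\hat\nu\|\Omega_\psi\|\|h_{x_2}\|,$$ ensures $h(x(t))\geq0$ for all $t>0$ along the closed-loop trajectory.
   Context: Let $m\ge0$, $n\ge1$, $[n]=\{1,\dots,n\}$, state $x=(x_1,x_2)\in\mathbb{R}^{m+n}$ ($x_2\in\mathbb{R}^n$), input $u\in\mathbb{R}^n$, system $$\dot x=f(x)+f_u(x)+\begin{pmatrix}0_m\\ f_\theta(x)\end{pmatrix}+\begin{pmatrix}0_{m\times n}\\ g(x)+g_\lambda(x)\end{pmatrix}u,$$ with $f$ known Lipschitz, $f_u$ unknown Lipschitz (both $\mathbb{R}^{m+n}\to\mathbb{R}^{m+n}$), $f_\theta(x)=[\theta_1^\top\varphi_1(x),\dots,\theta_n^\top\varphi_n(x)]^\top$ with known $\varphi_i:\mathbb{R}^{m+n}\to\mathbb{R}^{p_i}$ and unknown $\theta_i\in\mathbb{R}^{p_i}$; $g,g_\lambda$ are $n\times n$ matrices (not necessarily diagonal) with entries $(g)_{ij}=g_{ij}(x)$, $(g_\lambda)_{ij}=\lambda_{ij}^\top\psi_{ij}(x)$, with known $g_{ij}:\mathbb{R}^{m+n}\to\mathbb{R}$, $\psi_{ij}:\mathbb{R}^{m+n}\to\mathbb{R}^{q_{ij}}$ and unknown $\lambda_{ij}\in\mathbb{R}^{q_{ij}}$. $h:\mathbb{R}^{m+n}\to\mathbb{R}$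 is continuously differentiable, $h_x=\partial h/\partial x$, $h_{x_2}=\partial h/\partial x_2$ are row vectors with entries $h_{x,j}$. Norms: Euclidean for vectors. Vector inequalities are entrywise. Assumption A: known $\underline f_u,\overline f_u$ with $\underline f_u(x)\le f_u(x)\le\overline f_u(x)$ for all $x$ (entries $\underline f_{u,j},\overline f_{u,j}$). Assumption B$'$: known vectors with $\underline\theta_i\le\theta_i\le\overline\theta_i$ and $\underline\lambda_{ij}\le\lambda_{ij}\le\overline\lambda_{ij}$ for all $i,j\in[n]$. Assumption C$'$: with $\tilde g=g+g_\lambda$, there is a compact set $\mathcal{X}\supset\mathcal{C}$ and a constant $b^*>0$ such that for all $x\in\mathcal{X}$ the matrix $\frac{\tilde g(x)+\tilde g(x)^\top}{2}$ is positive definite with smallest singular value at least $b^*$. Fix nominal values $\theta_i^0\in[\underline\theta_i,\overline\theta_i]$, $\lambda_{ij}^0\in[\underline\lambda_{ij},\overline\lambda_{ij}]$ (entrywise). Let $\Theta=[\theta_1^\top,\dots,\theta_n^\top]^\top$, $\Theta^0=[\theta_1^{0\top},\dots,\theta_n^{0\top}]^\top$, $\Lambda=[\lambda_{11}^\top,\lambda_{12}^\top,\dots,\lambda_{nn}^\top]^\top$, $\Lambda^0$ analogously, $\Omega_\varphi=[\varphi_1^\top,\dots,\varphi_n^\top]^\top$, $\Omega_\psi=[\psi_{11}^\top,\psi_{12}^\top,\dots,\psi_{nn}^\top]^\top$, $f_\theta^0=[\theta_1^{0\top}\varphi_1,\dots,\theta_n^{0\top}\varphi_n]^\top$, and $g_\lambda^0$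 the $n\times n$ matrix with entries $\lambda_{ij}^{0\top}\psi_{ij}$. With $\overline\Theta,\underline\Theta,\overline\Lambda,\underline\Lambda$ the correspondingly stacked bound vectors, $M=\sum_i p_i$, $N=\sum_{i,j}q_{ij}$, set $\bar\mu=\sqrt{\sum_{j=1}^M\max\{(\overline\Theta_j-\Theta^0_j)^2,(\underline\Theta_j-\Theta^0_j)^2\}}$, $\bar\nu=\sqrt{\sum_{j=1}^N\max\{(\overline\Lambda_j-\Lambda^0_j)^2,(\underline\Lambda_j-\Lambda^0_j)^2\}}$. Define $\mathcal{M}(x)=h_x f+\sum_{j=1}^{m+n}\min\{h_{x,j}\underline f_{u,j},h_{x,j}\overline f_{u,j}\}$. *)

theory Defs
  imports "HOL-Analysis.Analysis"
begin

text \<open>State space: real^'s; the x2-block (dimension n = CARD('n)) is the set of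
  coordinates selected by an injective map iota :: 'n => 's; the remaining
  CARD('s) - CARD('n) >= 0 coordinates form x1 (so m = 0 is allowed).\<close>

definition emb :: "('n::finite \<Rightarrow> 's::finite) \<Rightarrow> real^'n \<Rightarrow> real^'s" where
  "emb iota v = (\<Sum>i\<in>UNIV. (v $ i) *\<^sub>R axis (iota i) 1)"

definition proj2 :: "('n::finite \<Rightarrow> 's::finite) \<Rightarrow> real^'s \<Rightarrow> real^'n" where
  "proj2 iota w = (\<chi> i. w $ iota i)"

definition lin_param ::
  "('n::finite \<Rightarrow> nat) \<Rightarrow> ('n \<Rightarrow> nat \<Rightarrow> real) \<Rightarrow> ('n \<Rightarrow> 'x \<Rightarrow> nat \<Rightarrow> real) \<Rightarrow> 'x \<Rightarrow> real^'n" where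
  "lin_param p th phi x = (\<chi> i. \<Sum>j<p i. th i j * phi i x j)"

definition mat_param ::
  "('n::finite \<Rightarrow> 'n \<Rightarrow> nat) \<Rightarrow> ('n \<Rightarrow> 'n \<Rightarrow> nat \<Rightarrow> real) \<Rightarrow> ('n \<Rightarrow> 'n \<Rightarrow> 'x \<Rightarrow> nat \<Rightarrow> real)
     \<Rightarrow> 'x \<Rightarrow> real^'n^'n" where
  "mat_param q lam psi x = (\<chi> i j. \<Sum>k<q i j. lam i j k * psi i j x k)"

definition norm_stack1 :: "('n::finite \<Rightarrow> nat) \<Rightarrow> ('n \<Rightarrow> 'x \<Rightarrow> nat \<Rightarrow> real) \<Rightarrow> 'x \<Rightarrow> real" where
  "norm_stack1 p phi x = sqrt (\<Sum>i\<in>UNIV. \<Sum>j<p i. (phi i x j)\<^sup>2)"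

definition norm_stack2 ::
  "('n::finite \<Rightarrow> 'n \<Rightarrow> nat) \<Rightarrow> ('n \<Rightarrow> 'n \<Rightarrow> 'x \<Rightarrow> nat \<Rightarrow> real) \<Rightarrow> 'x \<Rightarrow> real" where
  "norm_stack2 q psi x = sqrt (\<Sum>i\<in>UNIV. \<Sum>j\<in>UNIV. \<Sum>k<q i j. (psi i j x k)\<^sup>2)"

definition radius1 :: "('n::finite \<Rightarrow> nat) \<Rightarrow> ('n \<Rightarrow> nat \<Rightarrow> real) \<Rightarrow> ('n \<Rightarrow> nat \<Rightarrow> real) \<Rightarrow> ('n \<Rightarrow> nat \<Rightarrow> real) \<Rightarrow> real" where
  "radius1 p lo hi th0 = sqrt (\<Sum>i\<in>UNIV. \<Sum>j<p i. max ((hi i j - th0 i j)\<^sup>2) ((lo i j - th0 i j)\<^sup>2))"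

definition radius2 ::
  "('n::finite \<Rightarrow> 'n \<Rightarrow> nat) \<Rightarrow> ('n \<Rightarrow> 'n \<Rightarrow> nat \<Rightarrow> real) \<Rightarrow> ('n \<Rightarrow> 'n \<Rightarrow> nat \<Rightarrow> real)
     \<Rightarrow> ('n \<Rightarrow> 'n \<Rightarrow> nat \<Rightarrow> real) \<Rightarrow> real" where
  "radius2 q lo hi l0 = sqrt (\<Sum>i\<in>UNIV. \<Sum>j\<in>UNIV. \<Sum>k<q i j. max ((hi i j k - l0 i j k)\<^sup>2) ((lo i j k - l0 i j k)\<^sup>2))"

definition pos_def_mat :: "real^'n^'n \<Rightarrow> bool" where
  "pos_def_mat A \<longleftrightarrow> (\<forall>v. v \<noteq> 0 \<longrightarrow> v \<bullet> (A *v v) > 0)"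

definition smallest_sv :: "real^'n^'n \<Rightarrow> real" where
  "smallest_sv A = Inf {norm (A *v v) | v. norm v = 1}"

definition Mfun :: "(real^'s \<Rightarrow> real^'s) \<Rightarrow> (real^'s \<Rightarrow> real^'s) \<Rightarrow> (real^'s \<Rightarrow> real^'s)
    \<Rightarrow> (real^'s \<Rightarrow> real^'s) \<Rightarrow> real^'s \<Rightarrow> real" where
  "Mfun Dh f fulo fuhi x = Dh x \<bullet> f x
     + (\<Sum>j\<in>UNIV. min (Dh x $ j * fulo x $ j) (Dh x $ j * fuhi x $ j))"

end

theory Submission
  imports Defs
begin

lemma quad_nonneg_lin_zero:
  fixes a b :: real
  assumes "\<And>t. a * t + b * t^2 \<ge> 0"
  shows "a = 0"
proof (rule ccontr)
  assume a: "a \<noteq> 0"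
  obtain c where c: "c = \<bar>b\<bar> + 1" by simp
  define t where "t = - a / c"
  have d: "c > 0" "b - c < 0" using c by auto
  have e: "a * t + b * t^2 = (a^2 / c^2) * (b - c)"
    unfolding t_def using d by (simp add: field_simps power2_eq_square)
  have "a^2 / c^2 > 0" using a d by simp
  then have neg: "(a^2 / c^2) * (b - c) < 0" using d by (intro mult_pos_neg) auto
  have "a * t + b * t^2 < 0" using e neg by linarith
  with assms[of t] show False by simp
qed

lemma sym_inner:
  fixes S :: "real^'n^'n"
  assumes "transpose S = S"
  shows "x \<bullet> (S *v y) = y \<bullet> (S *v x)"
proof -
  have "x \<bullet> (S *v y) = (x v* S) \<bullet> y" by (simp add: dot_lmul_matrix)
  also have "x v* S = transpose S *v x" by simp
  finally show ?thesis using assms by (simp add: inner_commute)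
qed

lemma sym_pd_bound:
  fixes S :: "real^'n^'n"
  assumes sym: "transpose S = S" and pd: "pos_def_mat S" and sv: "smallest_sv S \<ge> b"
  shows "z \<bullet> (S *v z) \<ge> b * (norm z)^2"
proof -
  let ?Q = "\<lambda>v. v \<bullet> (S *v v)"
  have cont: "continuous_on (sphere 0 1) ?Q"
    by (intro continuous_intros)
  obtain i :: 'n where True by simp
  have ne: "sphere (0::real^'n) 1 \<noteq> {}"
    using norm_axis_1[of i] by (metis mem_sphere_0 empty_iff)
  obtain v0 where v0: "v0 \<in> sphere 0 1" and vmin: "\<And>y. y \<in> sphere 0 1 \<Longrightarrow> ?Q v0 \<le> ?Q y"
    using continuous_attains_inf[OF compact_sphere ne cont] by blast
  define m where "m = ?Q v0"
  have nv0: "norm v0 = 1" using v0 by simp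
  have allz: "?Q z \<ge> m * (norm z)^2" for z
  proof (cases "z = 0")
    case True then show ?thesis by simp
  next
    case False
    define v where "v = (1 / norm z) *\<^sub>R z"
    have "v \<in> sphere 0 1" using False by (simp add: v_def)
    then have "m \<le> ?Q v" using vmin m_def by blast
    also have "?Q v = ?Q z / (norm z)^2"
      by (simp add: v_def matrix_vector_mult_scaleR power2_eq_square)
    finally show ?thesis using False by (simp add: field_simps)
  qed
  define w where "w = S *v v0 - m *\<^sub>R v0"
  have "\<And>t. (2 * (w \<bullet> w)) * t + (?Q w - m * (w \<bullet> w)) * t^2 \<ge> 0"
  proof -
    fix t :: real
    have e1: "?Q (v0 + t *\<^sub>R w) = m + 2 * t * (w \<bullet> (S *v v0)) + t^2 * ?Q w"
    proof -
      have "S *v (v0 + t *\<^sub>R w) = S *v v0 + t *\<^sub>R (S *v w)"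
        by (simp add: matrix_vector_right_distrib matrix_vector_mult_scaleR)
      then have "?Q (v0 + t *\<^sub>R w) = v0 \<bullet> (S *v v0) + t * (v0 \<bullet> (S *v w)) + t * (w \<bullet> (S *v v0)) + (t * t) * (w \<bullet> (S *v w))"
        by (simp add: inner_add_left inner_add_right distrib_left mult.assoc)
      also have "v0 \<bullet> (S *v w) = w \<bullet> (S *v v0)" by (rule sym_inner[OF sym])
      finally show ?thesis by (simp add: m_def power2_eq_square)
    qed
    have e2: "(norm (v0 + t *\<^sub>R w))^2 = 1 + 2 * t * (v0 \<bullet> w) + t^2 * (w \<bullet> w)"
    proof -
      have "(norm (v0 + t *\<^sub>R w))^2 = (v0 + t *\<^sub>R w) \<bullet> (v0 + t *\<^sub>R w)"
        by (simp only: power2_norm_eq_inner)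
      also have "\<dots> = v0 \<bullet> v0 + 2 * t * (v0 \<bullet> w) + t^2 * (w \<bullet> w)"
        by (simp add: inner_add_left inner_add_right inner_commute[of w v0] algebra_simps power2_eq_square)
      also have "v0 \<bullet> v0 = 1" using nv0 by (simp add: dot_square_norm)
      finally show ?thesis by simp
    qed
    have "m * (norm (v0 + t *\<^sub>R w))^2 \<le> ?Q (v0 + t *\<^sub>R w)" by (rule allz)
    then have "0 \<le> 2 * t * (w \<bullet> (S *v v0) - m * (v0 \<bullet> w)) + t^2 * (?Q w - m * (w \<bullet> w))"
      unfolding e1 e2 by (simp add: algebra_simps)
    moreover have "w \<bullet> (S *v v0) - m * (v0 \<bullet> w) = w \<bullet> w"
    proof -
      have "w \<bullet> w = w \<bullet> (S *v v0) - m * (w \<bullet> v0)"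
        by (metis w_def inner_diff_right inner_scaleR_right)
      then show ?thesis by (simp add: inner_commute[of v0 w])
    qed
    ultimately show "(2 * (w \<bullet> w)) * t + (?Q w - m * (w \<bullet> w)) * t^2 \<ge> 0"
      by (simp add: algebra_simps)
  qed
  then have "2 * (w \<bullet> w) = 0" by (rule quad_nonneg_lin_zero)
  then have "w = 0" by simp
  then have eig: "S *v v0 = m *\<^sub>R v0" by (simp add: w_def)
  have "v0 \<noteq> 0" using nv0 by auto
  then have mpos: "m > 0" using pd unfolding pos_def_mat_def m_def by blast
  have "smallest_sv S \<le> norm (S *v v0)"
    unfolding smallest_sv_def
  proof (rule cInf_lower)
    show "norm (S *v v0) \<in> {norm (S *v v) |v. norm v = 1}" using nv0 by auto
    show "bdd_below {norm (S *v v) |v. norm v = 1}" by (rule bdd_belowI[of _ 0]) auto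
  qed
  also have "\<dots> = m" using eig nv0 mpos by simp
  finally have "b \<le> m" using sv by simp
  then have "b * (norm z)^2 \<le> m * (norm z)^2" by (simp add: mult_right_mono)
  with allz[of z] show ?thesis by simp
qed

lemma cs1:
  fixes x y :: "'a \<Rightarrow> real"
  shows "\<bar>\<Sum>k\<in>A. x k * y k\<bar> \<le> sqrt (\<Sum>k\<in>A. (x k)^2) * sqrt (\<Sum>k\<in>A. (y k)^2)"
proof -
  have "\<bar>\<Sum>k\<in>A. x k * y k\<bar> \<le> (\<Sum>k\<in>A. \<bar>x k * y k\<bar>)"
    by (rule sum_abs)
  also have "\<dots> = (\<Sum>k\<in>A. \<bar>x k\<bar> * \<bar>y k\<bar>)" by (simp only: abs_mult)
  also have "\<dots> \<le> L2_set x A * L2_set y A" by (rule L2_set_mult_ineq)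
  finally show ?thesis unfolding L2_set_def by simp
qed

lemma cs2:
  fixes u v :: "'a \<Rightarrow> 'b \<Rightarrow> real"
  assumes "finite I" "\<And>i. finite (J i)"
  shows "\<bar>\<Sum>i\<in>I. \<Sum>j\<in>J i. u i j * v i j\<bar>
     \<le> sqrt (\<Sum>i\<in>I. \<Sum>j\<in>J i. (u i j)^2) * sqrt (\<Sum>i\<in>I. \<Sum>j\<in>J i. (v i j)^2)"
proof -
  have S: "\<And>g::'a \<Rightarrow> 'b \<Rightarrow> real. (\<Sum>i\<in>I. \<Sum>j\<in>J i. g i j) = (\<Sum>(i,j)\<in>(SIGMA i:I. J i). g i j)"
    using assms by (intro sum.Sigma) auto
  show ?thesis unfolding S
    using cs1[of "\<lambda>(i,j). u i j" "\<lambda>(i,j). v i j" "SIGMA i:I. J i"]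
    by (simp add: case_prod_unfold)
qed

lemma cs3:
  fixes u v :: "'a \<Rightarrow> 'b \<Rightarrow> 'c \<Rightarrow> real"
  assumes "finite I" "\<And>i. finite (J i)" "\<And>i j. finite (K i j)"
  shows "\<bar>\<Sum>i\<in>I. \<Sum>j\<in>J i. \<Sum>k\<in>K i j. u i j k * v i j k\<bar>
     \<le> sqrt (\<Sum>i\<in>I. \<Sum>j\<in>J i. \<Sum>k\<in>K i j. (u i j k)^2) * sqrt (\<Sum>i\<in>I. \<Sum>j\<in>J i. \<Sum>k\<in>K i j. (v i j k)^2)"
proof -
  have S: "\<And>g::'a \<Rightarrow> 'b \<Rightarrow> 'c \<Rightarrow> real. (\<Sum>i\<in>I. \<Sum>j\<in>J i. \<Sum>k\<in>K i j. g i j k)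
       = (\<Sum>i\<in>I. \<Sum>(j,k)\<in>(SIGMA j:J i. K i j). g i j k)"
  proof -
    fix g :: "'a \<Rightarrow> 'b \<Rightarrow> 'c \<Rightarrow> real"
    have "\<And>i. (\<Sum>j\<in>J i. \<Sum>k\<in>K i j. g i j k) = (\<Sum>(j,k)\<in>(SIGMA j:J i. K i j). g i j k)"
      using assms by (intro sum.Sigma) auto
    then show "(\<Sum>i\<in>I. \<Sum>j\<in>J i. \<Sum>k\<in>K i j. g i j k)
       = (\<Sum>i\<in>I. \<Sum>(j,k)\<in>(SIGMA j:J i. K i j). g i j k)" by simp
  qed
  have fin: "\<And>i. finite (SIGMA j:J i. K i j)" using assms by auto
  show ?thesis unfolding S
    using cs2[OF assms(1) fin, of "\<lambda>i (j,k). u i j k" "\<lambda>i (j,k). v i j k"]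
    by (simp add: case_prod_unfold)
qed

lemma norm_sq_cart: "(norm (a::real^'n))^2 = (\<Sum>i\<in>UNIV. (a$i)^2)"
  unfolding power2_norm_eq_inner inner_vec_def by (simp add: power2_eq_square)

lemma comp_sq_le: "(a$i)^2 \<le> (norm (a::real^'n))^2"
  using component_le_norm_cart[of a i] by (metis abs_ge_zero abs_le_square_iff abs_norm_cancel norm_ge_zero power2_abs)

lemma sq_dev_le:
  fixes lo hi th th0 :: real
  assumes "lo \<le> th" "th \<le> hi" "lo \<le> th0" "th0 \<le> hi"
  shows "(th - th0)^2 \<le> max ((hi - th0)^2) ((lo - th0)^2)"
proof (cases "th \<ge> th0")
  case True
  then have "(th - th0)^2 \<le> (hi - th0)^2" using assms by (intro power_mono) auto
  then show ?thesis by simp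
next
  case False
  then have "(th0 - th)^2 \<le> (th0 - lo)^2" using assms by (intro power_mono) auto
  then show ?thesis by (simp add: power2_commute)
qed

lemma emb_inner: "d \<bullet> emb iota v = proj2 iota d \<bullet> v"
proof -
  have "d \<bullet> emb iota v = (\<Sum>i\<in>UNIV. v $ i * (d \<bullet> axis (iota i) 1))"
    unfolding emb_def by (simp add: inner_sum_right)
  also have "\<dots> = (\<Sum>i\<in>UNIV. v $ i * d $ iota i)" by (simp add: inner_axis)
  also have "\<dots> = proj2 iota d \<bullet> v" unfolding proj2_def inner_vec_def by (simp add: mult.commute)
  finally show ?thesis .
qed

lemma mfun_bound:
  assumes "\<And>j. fulo x $ j \<le> fu x $ j \<and> fu x $ j \<le> fuhi x $ j"
  shows "Dh x \<bullet> (f x + fu x) \<ge> Mfun Dh f fulo fuhi x"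
proof -
  have "(\<Sum>j\<in>UNIV. min (Dh x $ j * fulo x $ j) (Dh x $ j * fuhi x $ j)) \<le> (\<Sum>j\<in>UNIV. Dh x $ j * fu x $ j)"
  proof (rule sum_mono)
    fix j
    show "min (Dh x $ j * fulo x $ j) (Dh x $ j * fuhi x $ j) \<le> Dh x $ j * fu x $ j"
    proof (cases "Dh x $ j \<ge> 0")
      case True then show ?thesis using assms[of j] by (simp add: min.coboundedI1 mult_left_mono)
    next
      case False then show ?thesis using assms[of j]
        by (intro min.coboundedI2) (simp add: mult_left_mono_neg)
    qed
  qed
  then show ?thesis unfolding Mfun_def by (simp add: inner_add_right inner_vec_def distrib_left sum.distrib)
qed

lemma lin_inner: "a \<bullet> lin_param p L phi x = (\<Sum>i\<in>UNIV. \<Sum>j<p i. (a$i * phi i x j) * L i j)"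
  unfolding lin_param_def inner_vec_def by (simp add: sum_distrib_left mult_ac)

lemma ftheta_bound:
  fixes a :: "real^'n"
  assumes B: "\<And>i j. j < p i \<Longrightarrow> thlo i j \<le> th i j \<and> th i j \<le> thhi i j"
    and N: "\<And>i j. j < p i \<Longrightarrow> thlo i j \<le> th0 i j \<and> th0 i j \<le> thhi i j"
  shows "a \<bullet> lin_param p th phi x \<ge> a \<bullet> lin_param p th0 phi x - norm a * radius1 p thlo thhi th0 * norm_stack1 p phi x"
proof -
  have diff: "a \<bullet> lin_param p th phi x - a \<bullet> lin_param p th0 phi x
      = (\<Sum>i\<in>UNIV. \<Sum>j<p i. (a$i * phi i x j) * (th i j - th0 i j))"
    unfolding lin_inner by (simp add: sum_subtractf right_diff_distrib)
  have cs: "\<bar>\<Sum>i\<in>UNIV. \<Sum>j<p i. (a$i * phi i x j) * (th i j - th0 i j)\<bar>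
     \<le> sqrt (\<Sum>i\<in>UNIV. \<Sum>j<p i. (a$i * phi i x j)^2) * sqrt (\<Sum>i\<in>UNIV. \<Sum>j<p i. (th i j - th0 i j)^2)"
    by (rule cs2) auto
  have s1: "(\<Sum>i\<in>UNIV. \<Sum>j<p i. (a$i * phi i x j)^2) \<le> (norm a)^2 * (\<Sum>i\<in>UNIV. \<Sum>j<p i. (phi i x j)^2)"
  proof -
    have "(\<Sum>i\<in>UNIV. \<Sum>j<p i. (a$i * phi i x j)^2) = (\<Sum>i\<in>UNIV. (a$i)^2 * (\<Sum>j<p i. (phi i x j)^2))"
      by (simp add: power_mult_distrib sum_distrib_left)
    also have "\<dots> \<le> (\<Sum>i\<in>UNIV. (norm a)^2 * (\<Sum>j<p i. (phi i x j)^2))"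
      by (intro sum_mono mult_right_mono comp_sq_le sum_nonneg) auto
    also have "\<dots> = (norm a)^2 * (\<Sum>i\<in>UNIV. \<Sum>j<p i. (phi i x j)^2)" by (simp add: sum_distrib_left)
    finally show ?thesis .
  qed
  have r1: "sqrt (\<Sum>i\<in>UNIV. \<Sum>j<p i. (a$i * phi i x j)^2) \<le> norm a * norm_stack1 p phi x"
  proof -
    have "sqrt (\<Sum>i\<in>UNIV. \<Sum>j<p i. (a$i * phi i x j)^2) \<le> sqrt ((norm a)^2 * (\<Sum>i\<in>UNIV. \<Sum>j<p i. (phi i x j)^2))"
      using s1 by (rule real_sqrt_le_mono)
    also have "\<dots> = norm a * norm_stack1 p phi x" unfolding norm_stack1_def by (simp add: real_sqrt_mult)
    finally show ?thesis .
  qed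
  have r2: "sqrt (\<Sum>i\<in>UNIV. \<Sum>j<p i. (th i j - th0 i j)^2) \<le> radius1 p thlo thhi th0"
    unfolding radius1_def
    by (intro real_sqrt_le_mono sum_mono sq_dev_le) (use B N in auto)
  have "\<bar>a \<bullet> lin_param p th phi x - a \<bullet> lin_param p th0 phi x\<bar> \<le> (norm a * norm_stack1 p phi x) * radius1 p thlo thhi th0"
    unfolding diff
  proof (rule order_trans[OF cs])
    have "0 \<le> norm a * norm_stack1 p phi x" unfolding norm_stack1_def by (intro mult_nonneg_nonneg norm_ge_zero real_sqrt_ge_zero sum_nonneg zero_le_power2)
    then show "sqrt (\<Sum>i\<in>UNIV. \<Sum>j<p i. (a$i * phi i x j)^2) * sqrt (\<Sum>i\<in>UNIV. \<Sum>j<p i. (th i j - th0 i j)^2)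
       \<le> (norm a * norm_stack1 p phi x) * radius1 p thlo thhi th0"
      using r1 r2 by (intro mult_mono) (auto intro!: sum_nonneg)
  qed
  then show ?thesis by (simp add: abs_le_iff algebra_simps)
qed

lemma mat_inner: "a \<bullet> (mat_param q L psi x *v a) = (\<Sum>i\<in>UNIV. \<Sum>j\<in>UNIV. \<Sum>k<q i j. (a$i * a$j * psi i j x k) * L i j k)"
  unfolding mat_param_def inner_vec_def matrix_vector_mult_def
  by (simp add: sum_distrib_left sum_distrib_right mult_ac)

lemma glam_bound:
  fixes a :: "real^'n"
  assumes B: "\<And>i j k. k < q i j \<Longrightarrow> lamlo i j k \<le> lam i j k \<and> lam i j k \<le> lamhi i j k"
    and N: "\<And>i j k. k < q i j \<Longrightarrow> lamlo i j k \<le> lam0 i j k \<and> lam0 i j k \<le> lamhi i j k"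
  shows "\<bar>a \<bullet> (mat_param q lam psi x *v a) - a \<bullet> (mat_param q lam0 psi x *v a)\<bar>
          \<le> (norm a)^2 * radius2 q lamlo lamhi lam0 * norm_stack2 q psi x"
proof -
  have diff: "a \<bullet> (mat_param q lam psi x *v a) - a \<bullet> (mat_param q lam0 psi x *v a)
      = (\<Sum>i\<in>UNIV. \<Sum>j\<in>UNIV. \<Sum>k<q i j. (a$i * a$j * psi i j x k) * (lam i j k - lam0 i j k))"
    unfolding mat_inner by (simp add: sum_subtractf right_diff_distrib)
  have cs: "\<bar>\<Sum>i\<in>UNIV. \<Sum>j\<in>UNIV. \<Sum>k<q i j. (a$i * a$j * psi i j x k) * (lam i j k - lam0 i j k)\<bar>
     \<le> sqrt (\<Sum>i\<in>UNIV. \<Sum>j\<in>UNIV. \<Sum>k<q i j. (a$i * a$j * psi i j x k)^2)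
      * sqrt (\<Sum>i\<in>UNIV. \<Sum>j\<in>UNIV. \<Sum>k<q i j. (lam i j k - lam0 i j k)^2)"
    by (rule cs3) auto
  have s1: "(\<Sum>i\<in>UNIV. \<Sum>j\<in>UNIV. \<Sum>k<q i j. (a$i * a$j * psi i j x k)^2)
     \<le> ((norm a)^2)^2 * (\<Sum>i\<in>UNIV. \<Sum>j\<in>UNIV. \<Sum>k<q i j. (psi i j x k)^2)"
  proof -
    have "(\<Sum>i\<in>UNIV. \<Sum>j\<in>UNIV. \<Sum>k<q i j. (a$i * a$j * psi i j x k)^2)
        = (\<Sum>i\<in>UNIV. \<Sum>j\<in>UNIV. ((a$i)^2 * (a$j)^2) * (\<Sum>k<q i j. (psi i j x k)^2))"
      by (simp add: power_mult_distrib sum_distrib_left)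
    also have "\<dots> \<le> (\<Sum>i\<in>UNIV. \<Sum>j\<in>UNIV. ((norm a)^2 * (norm a)^2) * (\<Sum>k<q i j. (psi i j x k)^2))"
      by (intro sum_mono mult_right_mono mult_mono comp_sq_le sum_nonneg) auto
    also have "\<dots> = ((norm a)^2)^2 * (\<Sum>i\<in>UNIV. \<Sum>j\<in>UNIV. \<Sum>k<q i j. (psi i j x k)^2)"
      by (simp add: sum_distrib_left power2_eq_square)
    finally show ?thesis .
  qed
  have r1: "sqrt (\<Sum>i\<in>UNIV. \<Sum>j\<in>UNIV. \<Sum>k<q i j. (a$i * a$j * psi i j x k)^2) \<le> (norm a)^2 * norm_stack2 q psi x"
  proof -
    have "sqrt (\<Sum>i\<in>UNIV. \<Sum>j\<in>UNIV. \<Sum>k<q i j. (a$i * a$j * psi i j x k)^2)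
       \<le> sqrt (((norm a)^2)^2 * (\<Sum>i\<in>UNIV. \<Sum>j\<in>UNIV. \<Sum>k<q i j. (psi i j x k)^2))"
      using s1 by (rule real_sqrt_le_mono)
    also have "\<dots> = (norm a)^2 * norm_stack2 q psi x" unfolding norm_stack2_def real_sqrt_mult real_sqrt_abs by simp
    finally show ?thesis .
  qed
  have r2: "sqrt (\<Sum>i\<in>UNIV. \<Sum>j\<in>UNIV. \<Sum>k<q i j. (lam i j k - lam0 i j k)^2) \<le> radius2 q lamlo lamhi lam0"
    unfolding radius2_def
    by (intro real_sqrt_le_mono sum_mono sq_dev_le) (use B N in auto)
  have "\<bar>\<Sum>i\<in>UNIV. \<Sum>j\<in>UNIV. \<Sum>k<q i j. (a$i * a$j * psi i j x k) * (lam i j k - lam0 i j k)\<bar>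
      \<le> ((norm a)^2 * norm_stack2 q psi x) * radius2 q lamlo lamhi lam0"
  proof (rule order_trans[OF cs])
    have "0 \<le> (norm a)^2 * norm_stack2 q psi x" unfolding norm_stack2_def by (intro mult_nonneg_nonneg norm_ge_zero real_sqrt_ge_zero sum_nonneg zero_le_power2)
    then show "sqrt (\<Sum>i\<in>UNIV. \<Sum>j\<in>UNIV. \<Sum>k<q i j. (a$i * a$j * psi i j x k)^2)
      * sqrt (\<Sum>i\<in>UNIV. \<Sum>j\<in>UNIV. \<Sum>k<q i j. (lam i j k - lam0 i j k)^2)
       \<le> ((norm a)^2 * norm_stack2 q psi x) * radius2 q lamlo lamhi lam0"
      using r1 r2 by (intro mult_mono) (auto intro!: sum_nonneg)
  qed
  then show ?thesis unfolding diff by (simp add: algebra_simps)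
qed

lemma zlem: fixes z e :: real assumes "z \<ge> 0" "e > 0" shows "z^2 / (z + e) \<ge> z - e"
proof -
  have "(z - e) * (z + e) \<le> z^2" by (simp add: algebra_simps power2_eq_square)
  then show ?thesis using assms by (simp add: le_divide_eq)
qed

lemma scalar_main:
  fixes bs ea eb gam gth glam mu nu A P Q Mv Mf Ft F0 Ga Ps1 hx w ka kb s mb nb :: real
  assumes bs: "bs > 0" and ea: "ea > 0" and eb: "eb > 0" and gam: "gam > 0"
    and gth: "gth > 0" and glam: "glam > 0"
    and mu: "mu > 0" and nu: "nu > 0" and A: "A \<ge> 0" and P: "P \<ge> 0" and Q: "Q \<ge> 0"
    and Mv: "Mv \<ge> Mf" and Ft: "Ft \<ge> F0 - A * mb * P" and Ga: "Ga \<ge> bs * A^2"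
    and Dl: "\<bar>Ga - Ps1\<bar> \<le> A^2 * nb * Q"
    and K: "Mf + F0 - (ea + eb) + gam * (hx - mb^2 / (2 * gth) - nb^2 / (2 * glam)) + Ps1 * w \<ge> 0"
    and ka: "ka = mu^2 * P^2 / (mu * P * A + ea)" and kb: "kb = nu * Q * A"
    and s: "s = w + ka / bs + kb^2 * w^2 / (bs * (kb * A * \<bar>w\<bar> + eb))"
  shows "Mv + Ft + s * Ga - (mu - mb) * (- gam * mu + gth * A * P) / gth
           - (nu - nb) * (- gam * nu + glam * A^2 * \<bar>w\<bar> * Q) / glam
        \<ge> - gam * (hx - (mu - mb)^2 / (2 * gth) - (nu - nb)^2 / (2 * glam)) + gam * mu^2 / (2 * gth)"
proof -
  have z1: "mu * P * A \<ge> 0" using mu P A by simp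
  have z2: "kb * A * \<bar>w\<bar> \<ge> 0" using kb nu Q A by simp
  have k1nn: "ka \<ge> 0" unfolding ka using z1 ea by simp
  have t2nn: "kb^2 * w^2 / (bs * (kb * A * \<bar>w\<bar> + eb)) \<ge> 0" using z2 eb bs by simp
  define r where "r = ka / bs + kb^2 * w^2 / (bs * (kb * A * \<bar>w\<bar> + eb))"
  have rnn: "r \<ge> 0" unfolding r_def using k1nn bs t2nn by simp
  have sGa: "s * Ga = w * Ga + r * Ga" unfolding s r_def by (simp add: algebra_simps)
  have "r * Ga \<ge> r * (bs * A^2)" using rnn Ga by (simp add: mult_left_mono)
  also have "r * (bs * A^2) = ka * A^2 + (kb * A * \<bar>w\<bar>)^2 / (kb * A * \<bar>w\<bar> + eb)"
  proof -
    have d: "kb * A * \<bar>w\<bar> + eb > 0" using z2 eb by simp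
    have p1: "ka / bs * (bs * A^2) = ka * A^2" using bs by simp
    have p2: "kb^2 * w^2 / (bs * (kb * A * \<bar>w\<bar> + eb)) * (bs * A^2)
        = (kb * A * \<bar>w\<bar>)^2 / (kb * A * \<bar>w\<bar> + eb)"
      using bs d by (simp add: power_mult_distrib)
    show ?thesis unfolding r_def distrib_right p1 p2 ..
  qed
  finally have rGa: "r * Ga \<ge> ka * A^2 + (kb * A * \<bar>w\<bar>)^2 / (kb * A * \<bar>w\<bar> + eb)" .
  have "ka * A^2 = (mu * P * A)^2 / (mu * P * A + ea)" unfolding ka by (simp add: power_mult_distrib)
  then have b1: "ka * A^2 \<ge> mu * P * A - ea" using zlem[OF z1 ea] by simp
  have b2: "(kb * A * \<bar>w\<bar>)^2 / (kb * A * \<bar>w\<bar> + eb) \<ge> kb * A * \<bar>w\<bar> - eb" using zlem[OF z2 eb] .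
  have "w * (Ga - Ps1) \<ge> - (\<bar>w\<bar> * (A^2 * nb * Q))"
  proof -
    have "\<bar>w * (Ga - Ps1)\<bar> \<le> \<bar>w\<bar> * (A^2 * nb * Q)" unfolding abs_mult
      using Dl by (simp add: mult_left_mono)
    then show ?thesis by linarith
  qed
  then have wGa: "w * Ga \<ge> w * Ps1 - \<bar>w\<bar> * A^2 * nb * Q" by (simp add: algebra_simps)
  have k2e: "kb * A * \<bar>w\<bar> = nu * Q * A^2 * \<bar>w\<bar>" unfolding kb by (simp add: power2_eq_square)
  have main: "Mv + Ft + s * Ga \<ge> - gam * (hx - mb^2 / (2 * gth) - nb^2 / (2 * glam))
        - A * mb * P - \<bar>w\<bar> * A^2 * nb * Q + mu * P * A + nu * Q * A^2 * \<bar>w\<bar>"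
  proof -
    have "- gam * (hx - mb^2 / (2 * gth) - nb^2 / (2 * glam)) = - (gam * (hx - mb^2 / (2 * gth) - nb^2 / (2 * glam)))" by simp
    moreover have "Ps1 * w = w * Ps1" by simp
    moreover have "mu * P * A = mu * P * A" ..
    ultimately show ?thesis using sGa rGa b1 b2 wGa k2e Mv Ft K by linarith
  qed
  have ident: "(- gam * (hx - mb^2 / (2 * gth) - nb^2 / (2 * glam))
        - A * mb * P - \<bar>w\<bar> * A^2 * nb * Q + mu * P * A + nu * Q * A^2 * \<bar>w\<bar>)
        - (mu - mb) * (- gam * mu + gth * A * P) / gth
        - (nu - nb) * (- gam * nu + glam * A^2 * \<bar>w\<bar> * Q) / glam
      = (- gam * (hx - (mu - mb)^2 / (2 * gth) - (nu - nb)^2 / (2 * glam)) + gam * mu^2 / (2 * gth))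
        + gam * nu^2 / (2 * glam)"
    using gth glam by (simp add: field_simps power2_eq_square)
  have "gam * nu^2 / (2 * glam) \<ge> 0" using gam glam by simp
  then show ?thesis using main ident by linarith
qed

lemma symm_part:
  fixes G :: "real^'n^'n"
  shows "transpose ((1/2) *\<^sub>R (G + transpose G)) = (1/2) *\<^sub>R (G + transpose G)"
    and "a \<bullet> (((1/2) *\<^sub>R (G + transpose G)) *v a) = a \<bullet> (G *v a)"
proof -
  show "transpose ((1/2) *\<^sub>R (G + transpose G)) = (1/2) *\<^sub>R (G + transpose G)"
    by (simp add: transpose_def vec_eq_iff)
  have t: "a \<bullet> (transpose G *v a) = a \<bullet> (G *v a)"
    using dot_lmul_matrix[of a G a] by (simp add: inner_commute)
  have "((1/2) *\<^sub>R (G + transpose G)) *v a = (1/2) *\<^sub>R (G *v a + transpose G *v a)"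
    by (simp add: scaleR_matrix_vector_assoc[symmetric] matrix_vector_mult_add_rdistrib)
  then show "a \<bullet> (((1/2) *\<^sub>R (G + transpose G)) *v a) = a \<bullet> (G *v a)"
    using t by (simp add: inner_add_right)
qed

lemma pos_ode:
  fixes y r :: "real \<Rightarrow> real"
  assumes d: "\<And>t. t \<in> {0..<T} \<Longrightarrow> (y has_real_derivative (- gam * y t + r t)) (at t within {0..<T})"
    and r: "\<And>t. t \<in> {0..<T} \<Longrightarrow> r t \<ge> 0" and y0: "y 0 > 0" and t: "t \<in> {0..<T}"
  shows "y t > 0"
proof -
  define W where "W s = exp (gam * s) * y s" for s
  have dW: "(W has_real_derivative exp (gam * s) * r s) (at s within {0..<T})" if s: "s \<in> {0..<T}" for s
  proof -
    have e: "((\<lambda>s. exp (gam * s)) has_real_derivative exp (gam * s) * gam) (at s within {0..<T})"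
      by (auto intro!: derivative_eq_intros)
    have "((\<lambda>s. exp (gam * s) * y s) has_real_derivative
        (exp (gam * s) * gam) * y s + (- gam * y s + r s) * exp (gam * s)) (at s within {0..<T})"
      by (rule DERIV_mult[OF e d[OF s]])
    moreover have "(exp (gam * s) * gam) * y s + (- gam * y s + r s) * exp (gam * s) = exp (gam * s) * r s"
      by (simp add: algebra_simps)
    ultimately show ?thesis unfolding W_def by simp
  qed
  have cont: "continuous_on {0..<T} W" by (rule DERIV_continuous_on[OF dW])
  have "W 0 \<le> W t"
  proof (cases "t = 0")
    case True then show ?thesis by simp
  next
    case False
    then have t0: "0 \<le> t" "t < T" using t by auto
    show ?thesis
    proof (rule DERIV_nonneg_imp_increasing_open[OF t0(1)])
      fix x assume x: "0 < x" "x < t"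
      then have "x \<in> interior {0..<T}" using t0 by simp
      then have "at x within {0..<T} = at x" by (rule at_within_interior)
      moreover have "x \<in> {0..<T}" using x t0 by simp
      ultimately show "\<exists>y. (W has_real_derivative y) (at x) \<and> 0 \<le> y"
        using dW r by (metis exp_gt_zero less_eq_real_def mult_nonneg_nonneg)
    next
      show "continuous_on {0..t} W" using cont by (rule continuous_on_subset) (use t0 in auto)
    qed
  qed
  then have "0 < W t" using y0 by (simp add: W_def)
  then show ?thesis unfolding W_def by (simp add: zero_less_mult_iff)
qed

theorem theorem2:
  fixes iota :: "'n::finite \<Rightarrow> 's::finite"
    and f fu fulo fuhi :: "real^'s \<Rightarrow> real^'s"
    and p :: "'n \<Rightarrow> nat" and phi :: "'n \<Rightarrow> real^'s \<Rightarrow> nat \<Rightarrow> real"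
    and th thlo thhi th0 :: "'n \<Rightarrow> nat \<Rightarrow> real"
    and g :: "real^'s \<Rightarrow> real^'n^'n"
    and q :: "'n \<Rightarrow> 'n \<Rightarrow> nat" and psi :: "'n \<Rightarrow> 'n \<Rightarrow> real^'s \<Rightarrow> nat \<Rightarrow> real"
    and lam lamlo lamhi lam0 :: "'n \<Rightarrow> 'n \<Rightarrow> nat \<Rightarrow> real"
    and h :: "real^'s \<Rightarrow> real" and Dh :: "real^'s \<Rightarrow> real^'s"
    and X :: "(real^'s) set" and bstar :: real
    and gam eps1 eps2 gth glam :: real
    and u0 :: "real^'s \<Rightarrow> real"
    and T :: real and xt :: "real \<Rightarrow> real^'s" and muh nuh :: "real \<Rightarrow> real"
  assumes iota_inj: "inj iota"
    (* known/unknown drift terms are Lipschitz *)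
    and f_lip: "\<exists>L. L-lipschitz_on UNIV f"
    and fu_lip: "\<exists>L. L-lipschitz_on UNIV fu"
    (* h is continuously differentiable with gradient (row vector) Dh *)
    and h_deriv: "\<And>x. (h has_derivative (\<lambda>v. Dh x \<bullet> v)) (at x)"
    and Dh_cont: "continuous_on UNIV Dh"
    (* Assumption A *)
    and assmA: "\<And>x j. fulo x $ j \<le> fu x $ j \<and> fu x $ j \<le> fuhi x $ j"
    (* Assumption B' *)
    and assmB_th: "\<And>i j. j < p i \<Longrightarrow> thlo i j \<le> th i j \<and> th i j \<le> thhi i j"
    and assmB_lam: "\<And>i j k. k < q i j \<Longrightarrow> lamlo i j k \<le> lam i j k \<and> lam i j k \<le> lamhi i j k"
    (* nominal values *)
    and nom_th: "\<And>i j. j < p i \<Longrightarrow> thlo i j \<le> th0 i j \<and> th0 i j \<le> thhi i j"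
    and nom_lam: "\<And>i j k. k < q i j \<Longrightarrow> lamlo i j k \<le> lam0 i j k \<and> lam0 i j k \<le> lamhi i j k"
    (* Assumption C' *)
    and X_compact: "compact X"
    and C_sub_X: "{x. h x \<ge> 0} \<subseteq> X"
    and bstar_pos: "bstar > 0"
    and assmC: "\<And>x. x \<in> X \<Longrightarrow>
       pos_def_mat ((1/2) *\<^sub>R ((g x + mat_param q lam psi x) + transpose (g x + mat_param q lam psi x)))
       \<and> smallest_sv ((1/2) *\<^sub>R ((g x + mat_param q lam psi x) + transpose (g x + mat_param q lam psi x))) \<ge> bstar"
    (* (ii) constants and nonemptiness of K_BF^g(x) on C *)
    and pos: "gam > 0" "eps1 > 0" "eps2 > 0" "gth > 0" "glam > 0"
    and K_nonempty: "\<And>x. h x \<ge> 0 \<Longrightarrow>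
       {uu::real. Mfun Dh f fulo fuhi x + proj2 iota (Dh x) \<bullet> lin_param p th0 phi x - (eps1 + eps2)
          + gam * (h x - (radius1 p thlo thhi th0)\<^sup>2 / (2 * gth) - (radius2 q lamlo lamhi lam0)\<^sup>2 / (2 * glam))
          + (proj2 iota (Dh x) \<bullet> ((g x + mat_param q lam0 psi x) *v proj2 iota (Dh x))) * uu \<ge> 0} \<noteq> {}"
    (* (iii) u0 Lipschitz with u0(x) in K_BF^g(x) *)
    and u0_lip: "\<exists>L. L-lipschitz_on UNIV u0"
    and u0_K: "\<And>x. h x \<ge> 0 \<Longrightarrow>
       Mfun Dh f fulo fuhi x + proj2 iota (Dh x) \<bullet> lin_param p th0 phi x - (eps1 + eps2)
          + gam * (h x - (radius1 p thlo thhi th0)\<^sup>2 / (2 * gth) - (radius2 q lamlo lamhi lam0)\<^sup>2 / (2 * glam))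
          + (proj2 iota (Dh x) \<bullet> ((g x + mat_param q lam0 psi x) *v proj2 iota (Dh x))) * u0 x \<ge> 0"
    (* closed-loop trajectory on [0,T) *)
    and T_pos: "T > 0"
    and mu_ode: "\<And>t. t \<in> {0..<T} \<Longrightarrow>
       (muh has_real_derivative
          (- gam * muh t + gth * norm (proj2 iota (Dh (xt t))) * norm_stack1 p phi (xt t)))
        (at t within {0..<T})"
    and nu_ode: "\<And>t. t \<in> {0..<T} \<Longrightarrow>
       (nuh has_real_derivative
          (- gam * nuh t + glam * (norm (proj2 iota (Dh (xt t))))\<^sup>2 * \<bar>u0 (xt t)\<bar> * norm_stack2 q psi (xt t)))
        (at t within {0..<T})"
    and mu0: "muh 0 > 0" and nu0: "nuh 0 > 0"
    and x_ode: "\<And>t. t \<in> {0..<T} \<Longrightarrow>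
       (let x = xt t; hx2 = proj2 iota (Dh x); w = u0 x;
            k1 = (muh t)\<^sup>2 * (norm_stack1 p phi x)\<^sup>2
                 / (muh t * norm_stack1 p phi x * norm hx2 + eps1);
            k2 = nuh t * norm_stack2 q psi x * norm hx2;
            s = w + k1 / bstar + k2\<^sup>2 * w\<^sup>2 / (bstar * (k2 * norm hx2 * \<bar>w\<bar> + eps2));
            u = s *\<^sub>R hx2
        in (xt has_vector_derivative
              (f x + fu x + emb iota (lin_param p th phi x + (g x + mat_param q lam psi x) *v u)))
             (at t within {0..<T}))"
    (* (iv) initial condition *)
    and init: "h (xt 0) \<ge> ((muh 0)\<^sup>2 + (radius1 p thlo thhi th0)\<^sup>2) / (2 * gth)
                         + ((nuh 0)\<^sup>2 + (radius2 q lamlo lamhi lam0)\<^sup>2) / (2 * glam)"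
  shows "\<forall>t\<in>{0<..<T}. h (xt t) \<ge> 0"
proof -
  define mb where "mb = radius1 p thlo thhi th0"
  define nb where "nb = radius2 q lamlo lamhi lam0"
  define aa where "aa t = proj2 iota (Dh (xt t))" for t
  define P where "P t = norm_stack1 p phi (xt t)" for t
  define Q where "Q t = norm_stack2 q psi (xt t)" for t
  define w where "w t = u0 (xt t)" for t
  define G where "G t = g (xt t) + mat_param q lam psi (xt t)" for t
  define k1 where "k1 t = (muh t)\<^sup>2 * (P t)\<^sup>2 / (muh t * P t * norm (aa t) + eps1)" for t
  define k2 where "k2 t = nuh t * Q t * norm (aa t)" for t
  define sf where "sf t = w t + k1 t / bstar + (k2 t)\<^sup>2 * (w t)\<^sup>2 / (bstar * (k2 t * norm (aa t) * \<bar>w t\<bar> + eps2))" for t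
  define V where "V t = f (xt t) + fu (xt t) + emb iota (lin_param p th phi (xt t) + G t *v (sf t *\<^sub>R aa t))" for t
  define mud where "mud t = - gam * muh t + gth * norm (aa t) * P t" for t
  define nud where "nud t = - gam * nuh t + glam * (norm (aa t))\<^sup>2 * \<bar>w t\<bar> * Q t" for t
  define Bf where "Bf t = h (xt t) - (muh t - mb)\<^sup>2 / (2 * gth) - (nuh t - nb)\<^sup>2 / (2 * glam)" for t
  define Dv where "Dv t = Dh (xt t) \<bullet> V t - (muh t - mb) * mud t / gth - (nuh t - nb) * nud t / glam" for t
  have xd: "(xt has_vector_derivative V t) (at t within {0..<T})" if t: "t \<in> {0..<T}" for t
    using x_ode[OF t] unfolding Let_def V_def sf_def k1_def k2_def w_def aa_def P_def Q_def G_def by simp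
  have md: "(muh has_real_derivative mud t) (at t within {0..<T})" if t: "t \<in> {0..<T}" for t
    using mu_ode[OF t] unfolding mud_def aa_def P_def by simp
  have nd: "(nuh has_real_derivative nud t) (at t within {0..<T})" if t: "t \<in> {0..<T}" for t
    using nu_ode[OF t] unfolding nud_def aa_def Q_def w_def by simp
  have hd: "((\<lambda>t. h (xt t)) has_real_derivative (Dh (xt t) \<bullet> V t)) (at t within {0..<T})"
    if t: "t \<in> {0..<T}" for t
  proof -
    have x1: "(xt has_derivative (\<lambda>s. s *\<^sub>R V t)) (at t within {0..<T})"
      using xd[OF t] unfolding has_vector_derivative_def .
    have h1: "(h has_derivative (\<lambda>v. Dh (xt t) \<bullet> v)) (at (xt t) within xt ` {0..<T})"
      using h_deriv by (rule has_derivative_at_withinI)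
    have "((h \<circ> xt) has_derivative ((\<lambda>v. Dh (xt t) \<bullet> v) \<circ> (\<lambda>s. s *\<^sub>R V t))) (at t within {0..<T})"
      by (rule diff_chain_within[OF x1 h1])
    moreover have "((\<lambda>v. Dh (xt t) \<bullet> v) \<circ> (\<lambda>s. s *\<^sub>R V t)) = (*) (Dh (xt t) \<bullet> V t)"
      by (simp add: fun_eq_iff o_def mult.commute)
    ultimately show ?thesis unfolding has_field_derivative_def o_def by simp
  qed
  have Bd: "(Bf has_real_derivative Dv t) (at t within {0..<T})" if t: "t \<in> {0..<T}" for t
    unfolding Bf_def Dv_def
    using pos by (auto intro!: derivative_eq_intros hd[OF t] md[OF t] nd[OF t] simp: field_simps)
  have Bcont: "continuous_on {0..<T} Bf" by (rule DERIV_continuous_on[OF Bd])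
  have mupos: "muh t > 0" if t: "t \<in> {0..<T}" for t
  proof -
    have A1: "\<And>s. s \<in> {0..<T} \<Longrightarrow> (muh has_real_derivative - gam * muh s + gth * norm (aa s) * P s) (at s within {0..<T})"
      using md unfolding mud_def by simp
    have A2: "\<And>s. s \<in> {0..<T} \<Longrightarrow> 0 \<le> gth * norm (aa s) * P s"
      using pos unfolding P_def norm_stack1_def by (auto intro!: mult_nonneg_nonneg sum_nonneg)
    show ?thesis
      using pos_ode[where r="\<lambda>s. gth * norm (aa s) * P s" and y=muh and T=T and gam=gam, OF A1 A2 mu0 t] .
  qed
  have nupos: "nuh t > 0" if t: "t \<in> {0..<T}" for t
  proof -
    have A1: "\<And>s. s \<in> {0..<T} \<Longrightarrow> (nuh has_real_derivative - gam * nuh s + glam * (norm (aa s))\<^sup>2 * \<bar>w s\<bar> * Q s) (at s within {0..<T})"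
      using nd unfolding nud_def by simp
    have A2: "\<And>s. s \<in> {0..<T} \<Longrightarrow> 0 \<le> glam * (norm (aa s))\<^sup>2 * \<bar>w s\<bar> * Q s"
      using pos unfolding Q_def norm_stack2_def by (auto intro!: mult_nonneg_nonneg sum_nonneg)
    show ?thesis
      using pos_ode[where r="\<lambda>s. glam * (norm (aa s))\<^sup>2 * \<bar>w s\<bar> * Q s" and y=nuh and T=T and gam=gam, OF A1 A2 nu0 t] .
  qed
  have key: "Dv t > - gam * Bf t" if t: "t \<in> {0..<T}" and ht: "h (xt t) \<ge> 0" for t
  proof -
    define x where "x = xt t"
    define a where "a = aa t"
    have a_eq: "a = proj2 iota (Dh x)" unfolding a_def aa_def x_def ..
    have xX: "x \<in> X" using C_sub_X ht unfolding x_def by auto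
    define Ga where "Ga = a \<bullet> (G t *v a)"
    define Ps1 where "Ps1 = a \<bullet> ((g x + mat_param q lam0 psi x) *v a)"
    have DV: "Dh x \<bullet> V t = Dh x \<bullet> (f x + fu x) + a \<bullet> lin_param p th phi x + sf t * Ga"
      unfolding V_def Ga_def a_eq x_def
      by (simp add: inner_add_right emb_inner matrix_vector_mult_scaleR aa_def)
    have Gdiff: "Ga - Ps1 = a \<bullet> (mat_param q lam psi x *v a) - a \<bullet> (mat_param q lam0 psi x *v a)"
      unfolding Ga_def Ps1_def G_def x_def by (simp add: matrix_vector_mult_add_rdistrib inner_add_right)
    have Dl: "\<bar>Ga - Ps1\<bar> \<le> (norm a)^2 * nb * Q t"
      unfolding Gdiff nb_def Q_def x_def by (rule glam_bound) (simp_all add: assmB_lam nom_lam)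
    define Sm where "Sm = (1/2) *\<^sub>R (G t + transpose (G t))"
    have pd: "pos_def_mat Sm" and sv: "smallest_sv Sm \<ge> bstar"
      using assmC[OF xX] unfolding Sm_def G_def x_def by auto
    have "a \<bullet> (Sm *v a) \<ge> bstar * (norm a)^2"
      using sym_pd_bound[OF _ pd sv] symm_part(1) unfolding Sm_def by blast
    then have GaB: "Ga \<ge> bstar * (norm a)^2" unfolding Ga_def Sm_def symm_part(2) .
    have Mv: "Dh x \<bullet> (f x + fu x) \<ge> Mfun Dh f fulo fuhi x" using assmA by (rule mfun_bound)
    have Ft: "a \<bullet> lin_param p th phi x \<ge> a \<bullet> lin_param p th0 phi x - norm a * mb * P t"
      unfolding mb_def P_def x_def by (rule ftheta_bound) (simp_all add: assmB_th nom_th)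
    have K: "Mfun Dh f fulo fuhi x + a \<bullet> lin_param p th0 phi x - (eps1 + eps2)
          + gam * (h x - mb\<^sup>2 / (2 * gth) - nb\<^sup>2 / (2 * glam)) + Ps1 * w t \<ge> 0"
      using u0_K[OF ht] unfolding a_eq Ps1_def mb_def nb_def w_def x_def .
    have A: "norm a \<ge> 0" by simp
    have Pn: "P t \<ge> 0" unfolding P_def norm_stack1_def by (auto intro!: sum_nonneg)
    have Qn: "Q t \<ge> 0" unfolding Q_def norm_stack2_def by (auto intro!: sum_nonneg)
    have sm: "Dh x \<bullet> (f x + fu x) + a \<bullet> lin_param p th phi x + sf t * Ga
           - (muh t - mb) * (- gam * muh t + gth * norm a * P t) / gth
           - (nuh t - nb) * (- gam * nuh t + glam * (norm a)^2 * \<bar>w t\<bar> * Q t) / glam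
        \<ge> - gam * (h x - (muh t - mb)^2 / (2 * gth) - (nuh t - nb)^2 / (2 * glam)) + gam * (muh t)^2 / (2 * gth)"
      by (rule scalar_main[where bs=bstar and ea=eps1 and eb=eps2 and ka="k1 t" and kb="k2 t"])
        (use bstar_pos pos mupos[OF t] nupos[OF t] A Pn Qn Mv Ft GaB Dl K in
          \<open>simp_all add: k1_def k2_def sf_def a_def\<close>)
    have "Dv t \<ge> - gam * Bf t + gam * (muh t)^2 / (2 * gth)"
      using sm unfolding Dv_def DV[unfolded x_def] Bf_def mud_def nud_def a_def x_def .
    moreover have "gam * (muh t)^2 / (2 * gth) > 0" using pos mupos[OF t] by simp
    ultimately show ?thesis by linarith
  qed
  have B0: "Bf 0 \<ge> 0"
  proof -
    have mbnn: "mb \<ge> 0" unfolding mb_def radius1_def by (auto intro!: sum_nonneg simp: le_max_iff_disj)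
    have nbnn: "nb \<ge> 0" unfolding nb_def radius2_def by (auto intro!: sum_nonneg simp: le_max_iff_disj)
    have "(muh 0 - mb)\<^sup>2 \<le> (muh 0)\<^sup>2 + mb\<^sup>2" using mu0 mbnn by (simp add: power2_diff)
    then have a1: "(muh 0 - mb)\<^sup>2 / (2 * gth) \<le> ((muh 0)\<^sup>2 + mb\<^sup>2) / (2 * gth)"
      using pos by (intro divide_right_mono) auto
    have "(nuh 0 - nb)\<^sup>2 \<le> (nuh 0)\<^sup>2 + nb\<^sup>2" using nu0 nbnn by (simp add: power2_diff)
    then have a2: "(nuh 0 - nb)\<^sup>2 / (2 * glam) \<le> ((nuh 0)\<^sup>2 + nb\<^sup>2) / (2 * glam)"
      using pos by (intro divide_right_mono) auto
    show ?thesis unfolding Bf_def using a1 a2 init unfolding mb_def nb_def by linarith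
  qed
  have Bh: "Bf t \<le> h (xt t)" for t
  proof -
    have "(muh t - mb)\<^sup>2 / (2 * gth) \<ge> 0" "(nuh t - nb)\<^sup>2 / (2 * glam) \<ge> 0" using pos by auto
    then show ?thesis unfolding Bf_def by linarith
  qed
  show ?thesis
  proof (rule ballI, rule ccontr)
    fix t1 assume t1: "t1 \<in> {0<..<T}" and neg: "\<not> 0 \<le> h (xt t1)"
    define S where "S = {s \<in> {0..t1}. (\<lambda>_. 0) s \<le> Bf s}"
    have sub: "{0..t1} \<subseteq> {0..<T}" using t1 by auto
    have "closed S" unfolding S_def
      by (rule continuous_on_closed_Collect_le) (auto intro: continuous_on_subset[OF Bcont sub])
    moreover have "S \<noteq> {}" using B0 t1 unfolding S_def by (auto intro!: exI[of _ 0])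
    moreover have bdd: "bdd_above S" unfolding S_def by (rule bdd_aboveI[of _ t1]) auto
    ultimately have t0S: "Sup S \<in> S" by (rule closed_contains_Sup[rotated -1])
    define t0 where "t0 = Sup S"
    have t0: "0 \<le> t0" "t0 \<le> t1" "Bf t0 \<ge> 0" using t0S unfolding S_def t0_def by auto
    have "Bf t1 < 0" using Bh[of t1] neg by linarith
    then have "t0 \<noteq> t1" using t0 by auto
    then have lt: "t0 < t1" using t0 by linarith
    have t0T: "t0 \<in> {0..<T}" using t0 t1 by auto
    have "h (xt t0) \<ge> 0" using Bh[of t0] t0 by linarith
    then have kk: "Dv t0 > - gam * Bf t0" using key t0T by blast
    define W where "W s = exp (gam * s) * Bf s" for s
    have e: "((\<lambda>s. exp (gam * s)) has_real_derivative exp (gam * t0) * gam) (at t0 within {0..<T})"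
      by (auto intro!: derivative_eq_intros)
    have dW: "(W has_real_derivative (exp (gam * t0) * gam) * Bf t0 + Dv t0 * exp (gam * t0)) (at t0 within {0..<T})"
      unfolding W_def by (rule DERIV_mult[OF e Bd[OF t0T]])
    have "(exp (gam * t0) * gam) * Bf t0 + Dv t0 * exp (gam * t0) = exp (gam * t0) * (Dv t0 + gam * Bf t0)"
      by (simp add: algebra_simps)
    moreover have "exp (gam * t0) * (Dv t0 + gam * Bf t0) > 0" using kk by simp
    ultimately have dpos: "(exp (gam * t0) * gam) * Bf t0 + Dv t0 * exp (gam * t0) > 0" by simp
    obtain d where d: "d > 0" and dd: "\<And>hh. hh > 0 \<Longrightarrow> t0 + hh \<in> {0..<T} \<Longrightarrow> hh < d \<Longrightarrow> W t0 < W (t0 + hh)"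
      using has_real_derivative_pos_inc_right[OF dW dpos] by blast
    define hh where "hh = min (d / 2) (t1 - t0)"
    have hh: "hh > 0" "hh < d" "t0 + hh \<le> t1" using d lt unfolding hh_def by auto
    then have "t0 + hh \<in> {0..<T}" using t0 t1 by auto
    then have "W t0 < W (t0 + hh)" using dd hh by blast
    moreover have "W t0 \<ge> 0" unfolding W_def using t0 by simp
    ultimately have "W (t0 + hh) > 0" by linarith
    then have "Bf (t0 + hh) > 0" unfolding W_def by (simp add: zero_less_mult_iff)
    then have "t0 + hh \<in> S" unfolding S_def using hh t0 by auto
    then have "t0 + hh \<le> t0" unfolding t0_def using bdd by (rule cSup_upper)
    then show False using hh by simp
  qed
qed

end
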